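(* Let $d\ge2$ and $m=2^{d-1}$. The $d$-layer skip RNN graph with skip lengths $k_l=2^{l-1}$ ($l=1,\dots,d$) and the $d$-layer dilated RNN graph with dilations $s_l=2^{l-1}$ ($l=1,\dots,d$) have the same values of $\mathcal d_i(n)$ for all $i\in\mathbb Z$ and $1\le n\le m$, and hence the same mean recurrent length with period $m$.
   Context: Dilated RNN graph with dilations $s_1,\dots,s_d$: vertex set $\{x_t: t\in\mathbb Z\}\cup\{c^{(l)}_t: t\in\mathbb Z,\ 1\le l\le d\}$, edges $x_t\to c^{(1)}_t$, $c^{(l)}_t\to c^{(l+1)}_t$ for $1\le l<d$, and $c^{(l)}_t\to c^{(l)}_{t+s_l}$ for $1\le l\le d$ (all edges). Skip RNN graph with skip lengths $k_1,\dots,k_d$: same vertex set and the same edges $x_t\to c^{(1)}_t$, $c^{(l)}_t\to c^{(l+1)}_t$, together with both $c^{(l)}_t\to c^{(l)}_{t+1}$ and $c^{(l)}_t\to c^{(l)}_{t+k_l}$ for each $l$ (all edges). In both graphs $x_t$ is the input and $c^{(d)}_t$ the output at time $t$; $\mathcal d_i(n)$ is the number of edges of a shortest directed path from $x_i$ to $c^{(d)}_{i+n}$; the mean recurrent length with period $m$ is $\bar{\mathcal d}=\frac1m\sum_{n=1}^{m}\max_{i\in\mathbb Z}\mathcal d_i(n)$. *)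

theory Defs
  imports Complex_Main
begin

text \<open>Vertices: input x_t, and hidden states c^(l)_t (layer l, time t).\<close>
datatype vtx = X int | C nat int

definition dilated_edges :: "nat \<Rightarrow> (nat \<Rightarrow> nat) \<Rightarrow> (vtx \<times> vtx) set" where
  "dilated_edges d s =
     {(X t, C 1 t) | t. True}
   \<union> {(C l t, C (l + 1) t) | l t. 1 \<le> l \<and> l < d}
   \<union> {(C l t, C l (t + int (s l))) | l t. 1 \<le> l \<and> l \<le> d}"

definition skip_edges :: "nat \<Rightarrow> (nat \<Rightarrow> nat) \<Rightarrow> (vtx \<times> vtx) set" where
  "skip_edges d k =
     {(X t, C 1 t) | t. True}
   \<union> {(C l t, C (l + 1) t) | l t. 1 \<le> l \<and> l < d}
   \<union> {(C l t, C l (t + 1)) | l t. 1 \<le> l \<and> l \<le> d}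
   \<union> {(C l t, C l (t + int (k l))) | l t. 1 \<le> l \<and> l \<le> d}"

definition shortest_path_len :: "(vtx \<times> vtx) set \<Rightarrow> vtx \<Rightarrow> vtx \<Rightarrow> nat" where
  "shortest_path_len E u v = (LEAST k. (u, v) \<in> E ^^ k)"

definition rec_dist :: "(vtx \<times> vtx) set \<Rightarrow> nat \<Rightarrow> int \<Rightarrow> nat \<Rightarrow> nat" where
  "rec_dist E d i n = shortest_path_len E (X i) (C d (i + int n))"

definition mean_rec_len :: "(vtx \<times> vtx) set \<Rightarrow> nat \<Rightarrow> nat \<Rightarrow> real" where
  "mean_rec_len E d m = (1 / real m) * (\<Sum>n = 1..m. (SUP i::int. real (rec_dist E d i n)))"

end

theory Submission
  imports Defs
begin

abbreviation DD where "DD d \<equiv> dilated_edges d (\<lambda>l. 2 ^ (l - 1))"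
abbreviation SS where "SS d \<equiv> skip_edges d (\<lambda>l. 2 ^ (l - 1))"

lemma D_edge_inv:
  assumes "(w, C l t) \<in> DD d"
  shows "(w = X t \<and> l = 1) \<or> (w = C (l - 1) t \<and> 2 \<le> l \<and> l \<le> d)
        \<or> (w = C l (t - 2 ^ (l - 1)) \<and> 1 \<le> l \<and> l \<le> d)"
  using assms unfolding dilated_edges_def by auto

lemma D_horiz: "1 \<le> l \<Longrightarrow> l \<le> d \<Longrightarrow> (C l t, C l (t + 2 ^ (l - 1))) \<in> DD d"
  unfolding dilated_edges_def by auto

lemma D_up: "1 \<le> l \<Longrightarrow> l < d \<Longrightarrow> (C l t, C (l + 1) t) \<in> DD d"
  unfolding dilated_edges_def by auto

lemma dil_step:
  "(X i, C l t) \<in> DD d ^^ k \<Longrightarrow> 1 \<le> l \<Longrightarrow> l \<le> d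
   \<Longrightarrow> (X i, C l (t + 1)) \<in> DD d ^^ Suc k"
proof (induction k arbitrary: l t)
  case 0
  then show ?case by simp
next
  case (Suc k)
  from Suc.prems(1) obtain w where w: "(X i, w) \<in> DD d ^^ k" "(w, C l t) \<in> DD d" by auto
  show ?case
  proof (cases "l = 1")
    case True
    have "(C l t, C l (t + 1)) \<in> DD d" using D_horiz[of l d t] True Suc.prems by simp
    then show ?thesis using Suc.prems(1) by auto
  next
    case False
    with D_edge_inv[OF w(2)] have
      "(w = C (l - 1) t \<and> 2 \<le> l \<and> l \<le> d) \<or> (w = C l (t - 2 ^ (l - 1)) \<and> 1 \<le> l \<and> l \<le> d)"
      by auto
    then show ?thesis
    proof
      assume a: "w = C (l - 1) t \<and> 2 \<le> l \<and> l \<le> d"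
      have "(X i, C (l - 1) (t + 1)) \<in> DD d ^^ Suc k" using Suc.IH[of "l - 1" t] a w(1) by auto
      moreover have "(C (l - 1) (t + 1), C l (t + 1)) \<in> DD d"
        proof -
        have "1 \<le> l - 1" "l - 1 < d" "l - 1 + 1 = l" using a by auto
        then show ?thesis using D_up[of "l - 1" d "t + 1"] by metis
      qed
      ultimately show ?thesis by auto
    next
      assume a: "w = C l (t - 2 ^ (l - 1)) \<and> 1 \<le> l \<and> l \<le> d"
      have "(X i, C l (t - 2 ^ (l - 1) + 1)) \<in> DD d ^^ Suc k" using Suc.IH[of l "t - 2 ^ (l - 1)"] a w(1) by auto
      moreover have "(C l (t - 2 ^ (l - 1) + 1), C l (t + 1)) \<in> DD d"
        using D_horiz[of l d "t - 2 ^ (l - 1) + 1"] a by (simp add: algebra_simps)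
      ultimately show ?thesis by auto
    qed
  qed
qed

lemma skip_to_dil: "(X i, v) \<in> SS d ^^ k \<Longrightarrow> (X i, v) \<in> DD d ^^ k"
proof (induction k arbitrary: v)
  case 0
  then show ?case by simp
next
  case (Suc k)
  from Suc.prems obtain w where w: "(X i, w) \<in> SS d ^^ k" "(w, v) \<in> SS d" by auto
  have wd: "(X i, w) \<in> DD d ^^ k" using Suc.IH w(1) by auto
  show ?case
  proof (cases "(w, v) \<in> DD d")
    case True
    then show ?thesis using wd by auto
  next
    case False
    with w(2) obtain l t where "w = C l t" "v = C l (t + 1)" "1 \<le> l" "l \<le> d"
      unfolding skip_edges_def dilated_edges_def by auto
    then show ?thesis using dil_step wd by auto
  qed
qed

lemma dil_sub_skip: "DD d \<subseteq> SS d"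
  unfolding dilated_edges_def skip_edges_def by auto

lemma dil_to_skip: "(u, v) \<in> DD d ^^ k \<Longrightarrow> (u, v) \<in> SS d ^^ k"
proof (induction k arbitrary: v)
  case (Suc k)
  then show ?case using dil_sub_skip by auto
qed simp

lemma rec_eq: "rec_dist (SS d) d i n = rec_dist (DD d) d i n"
  unfolding rec_dist_def shortest_path_len_def
  using skip_to_dil dil_to_skip by metis

theorem mainTheorem5:
  fixes d m :: nat
  assumes "d \<ge> 2" and "m = 2 ^ (d - 1)"
  shows "(\<forall>i::int. \<forall>n. 1 \<le> n \<and> n \<le> m \<longrightarrow>
            rec_dist (skip_edges d (\<lambda>l. 2 ^ (l - 1))) d i n
          = rec_dist (dilated_edges d (\<lambda>l. 2 ^ (l - 1))) d i n)
       \<and> mean_rec_len (skip_edges d (\<lambda>l. 2 ^ (l - 1))) d m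
          = mean_rec_len (dilated_edges d (\<lambda>l. 2 ^ (l - 1))) d m"
  using rec_eq unfolding mean_rec_len_def by simp

end
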